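(* For any object $(E,\sigma)$ of $\mathrm{OS}_B$, every upward-closed subset (ideal) of the poset $E^\star$ is an ordered language on the alphabet $E$.
   Context: An object of $\mathrm{OS}_B$ is a pair $(E,\sigma)$ with $E$ a totally ordered finite set and $\sigma$ an order-reversing involution with a unique fixed point; $-e:=\sigma(e)$. $E^\star$ is the set of finite words in $E$ with the partial order: $e_1\cdots e_m\le f_1\cdots f_n$ iff there is a strictly increasing $\theta:[m]\to[n]$ with $e_i=f_{\theta(i)}$ for all $i$ and, for each $j\in[n]$, some $i$ with $\theta(i)\le j$ and $f_{\theta(i)}\in\{\pm f_j\}$. For a finite set $\Sigma$, a language is a subset of $\Sigma^\star$; the concatenation of two languages is the set of concatenations of a word of the first with a word of the second. The ordered languages on $\Sigma$ form the smallest collection of languages containing all singleton languages $\{w\}$ and all languages $\Pi^\star$ for $\Pi\subset\Sigma$, and closed under finite unions and concatenations. *)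

theory Defs
  imports Main
begin

definition OS_B_obj :: "'a::linorder set \<Rightarrow> ('a \<Rightarrow> 'a) \<Rightarrow> bool" where
  "OS_B_obj E \<sigma> \<longleftrightarrow> finite E
     \<and> (\<forall>e\<in>E. \<sigma> e \<in> E)
     \<and> (\<forall>e\<in>E. \<sigma> (\<sigma> e) = e)
     \<and> (\<forall>e\<in>E. \<forall>f\<in>E. e < f \<longrightarrow> \<sigma> f < \<sigma> e)
     \<and> (\<exists>!e. e \<in> E \<and> \<sigma> e = e)"

definition word_le :: "('a \<Rightarrow> 'a) \<Rightarrow> 'a list \<Rightarrow> 'a list \<Rightarrow> bool" where
  "word_le \<sigma> v w \<longleftrightarrow> (\<exists>\<theta> :: nat \<Rightarrow> nat.
      strict_mono_on {..<length v} \<theta>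
      \<and> (\<forall>i<length v. \<theta> i < length w \<and> v ! i = w ! (\<theta> i))
      \<and> (\<forall>j<length w. \<exists>i<length v. \<theta> i \<le> j \<and> w ! (\<theta> i) \<in> {w ! j, \<sigma> (w ! j)}))"

definition upward_closed :: "'a set \<Rightarrow> ('a \<Rightarrow> 'a) \<Rightarrow> 'a list set \<Rightarrow> bool" where
  "upward_closed E \<sigma> I \<longleftrightarrow> I \<subseteq> lists E
     \<and> (\<forall>v w. v \<in> I \<and> w \<in> lists E \<and> word_le \<sigma> v w \<longrightarrow> w \<in> I)"

definition conc :: "'a list set \<Rightarrow> 'a list set \<Rightarrow> 'a list set" where
  "conc A B = {u @ v | u v. u \<in> A \<and> v \<in> B}"

inductive ordered_language :: "'a set \<Rightarrow> 'a list set \<Rightarrow> bool" for \<Sigma> :: "'a set" where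
  singleton: "w \<in> lists \<Sigma> \<Longrightarrow> ordered_language \<Sigma> {w}"
| star: "\<Pi> \<subseteq> \<Sigma> \<Longrightarrow> ordered_language \<Sigma> (lists \<Pi>)"
| empty: "ordered_language \<Sigma> {}"
| union: "ordered_language \<Sigma> A \<Longrightarrow> ordered_language \<Sigma> B \<Longrightarrow> ordered_language \<Sigma> (A \<union> B)"
| concat: "ordered_language \<Sigma> A \<Longrightarrow> ordered_language \<Sigma> B \<Longrightarrow> ordered_language \<Sigma> (conc A B)"

end

theory Submission imports Defs "HOL-Library.Infinite_Set" begin

inductive emb :: "('a \<Rightarrow> 'a) \<Rightarrow> 'a list \<Rightarrow> 'a list \<Rightarrow> bool" for \<sigma> where
  Nil: "emb \<sigma> [] []"
| Same: "emb \<sigma> v w \<Longrightarrow> emb \<sigma> (x#v) (x#w)"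
| Skip: "emb \<sigma> v w \<Longrightarrow> \<exists>u\<in>set w. u = x \<or> u = \<sigma> x \<Longrightarrow> emb \<sigma> v (x#w)"

lemma emb_refl: "emb \<sigma> w w" by (induction w) (auto intro: emb.intros)

lemma emb_set: "emb \<sigma> v w \<Longrightarrow> set v \<subseteq> set w" by (induction rule: emb.induct) auto

lemma emb_length: "emb \<sigma> v w \<Longrightarrow> length v \<le> length w" by (induction rule: emb.induct) auto

lemma emb_length_eq: "emb \<sigma> v w \<Longrightarrow> length v = length w \<Longrightarrow> v = w"
  by (induction rule: emb.induct) (auto dest: emb_length)

lemma emb_Nil: "emb \<sigma> v w \<Longrightarrow> v = [] \<Longrightarrow> w = []"
  by (induction rule: emb.induct) auto

lemma emb_trans: "emb \<sigma> v w \<Longrightarrow> emb \<sigma> u v \<Longrightarrow> emb \<sigma> u w"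
proof (induction v w arbitrary: u rule: emb.induct)
  case Nil thus ?case by simp
next
  case (Same v w x)
  from Same.prems show ?case
  proof (cases rule: emb.cases)
    case (Same u')
    thus ?thesis using Same.IH by (auto intro: emb.Same)
  next
    case Skip
    thus ?thesis using Same.IH Same.hyps emb_set by (metis emb.Skip subsetD)
  qed
next
  case (Skip v w x) thus ?case by (auto intro: emb.Skip)
qed

lemma emb_cls:
  assumes "emb \<sigma> v w" "set w \<subseteq> E" "\<forall>e\<in>E. \<sigma> (\<sigma> e) = e"
  shows "\<forall>x\<in>set w. \<exists>u\<in>set v. u = x \<or> u = \<sigma> x"
  using assms
proof (induction rule: emb.induct)
  case Nil thus ?case by simp
next
  case (Same v w x) thus ?case by auto
next
  case (Skip v w x)
  then obtain u' where u': "u' \<in> set w" "u' = x \<or> u' = \<sigma> x" by auto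
  from Skip have IH: "\<forall>x\<in>set w. \<exists>u\<in>set v. u = x \<or> u = \<sigma> x" by auto
  from IH u' obtain u where "u \<in> set v" "u = u' \<or> u = \<sigma> u'" by auto
  moreover have "\<sigma> (\<sigma> x) = x" using Skip.prems by auto
  ultimately have "\<exists>u\<in>set v. u = x \<or> u = \<sigma> x" using u' by metis
  thus ?case using IH by auto
qed

lemma word_le_Nil: "word_le \<sigma> [] []" unfolding word_le_def by simp

lemma word_le_snoc_same:
  assumes "word_le \<sigma> v w" shows "word_le \<sigma> (v @ [x]) (w @ [x])"
proof -
  from assms obtain \<theta> where m: "strict_mono_on {..<length v} \<theta>"
    and c2: "\<forall>i<length v. \<theta> i < length w \<and> v ! i = w ! (\<theta> i)"
    and c3: "\<forall>j<length w. \<exists>i<length v. \<theta> i \<le> j \<and> w ! (\<theta> i) \<in> {w ! j, \<sigma> (w ! j)}"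
    unfolding word_le_def by blast
  define \<theta>' where "\<theta>' = \<theta>(length v := length w)"
  have "strict_mono_on {..<length (v@[x])} \<theta>'"
  proof (rule strict_mono_onI)
    fix r s assume "r \<in> {..<length (v@[x])}" "s \<in> {..<length (v@[x])}" "r < s"
    thus "\<theta>' r < \<theta>' s" using m c2 unfolding \<theta>'_def
      by (auto simp: less_Suc_eq strict_mono_on_def)
  qed
  moreover have "\<forall>i<length (v@[x]). \<theta>' i < length (w@[x]) \<and> (v@[x]) ! i = (w@[x]) ! (\<theta>' i)"
    using c2 unfolding \<theta>'_def by (auto simp: less_Suc_eq nth_append)
  moreover have "\<forall>j<length (w@[x]). \<exists>i<length (v@[x]). \<theta>' i \<le> j \<and> (w@[x]) ! (\<theta>' i) \<in> {(w@[x]) ! j, \<sigma> ((w@[x]) ! j)}"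
  proof (intro allI impI)
    fix j assume j: "j < length (w@[x])"
    show "\<exists>i<length (v@[x]). \<theta>' i \<le> j \<and> (w@[x]) ! (\<theta>' i) \<in> {(w@[x]) ! j, \<sigma> ((w@[x]) ! j)}"
    proof (cases "j < length w")
      case True
      then obtain i where "i<length v" "\<theta> i \<le> j" "w ! (\<theta> i) \<in> {w ! j, \<sigma> (w ! j)}" using c3 by blast
      thus ?thesis using True c2 unfolding \<theta>'_def
        by (intro exI[of _ i]) (auto simp: nth_append)
    next
      case False
      hence "j = length w" using j by simp
      thus ?thesis unfolding \<theta>'_def by (intro exI[of _ "length v"]) (auto simp: nth_append)
    qed
  qed
  ultimately show ?thesis unfolding word_le_def by blast
qed

lemma word_le_snoc_skip:
  assumes "word_le \<sigma> v w" "u \<in> set w" "u = x \<or> u = \<sigma> x" "\<sigma> (\<sigma> x) = x"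
  shows "word_le \<sigma> v (w @ [x])"
proof -
  from assms obtain \<theta> where m: "strict_mono_on {..<length v} \<theta>"
    and c2: "\<forall>i<length v. \<theta> i < length w \<and> v ! i = w ! (\<theta> i)"
    and c3: "\<forall>j<length w. \<exists>i<length v. \<theta> i \<le> j \<and> w ! (\<theta> i) \<in> {w ! j, \<sigma> (w ! j)}"
    unfolding word_le_def by blast
  have "\<forall>i<length v. \<theta> i < length (w@[x]) \<and> v ! i = (w@[x]) ! (\<theta> i)"
    using c2 by (auto simp: nth_append)
  moreover have "\<forall>j<length (w@[x]). \<exists>i<length v. \<theta> i \<le> j \<and> (w@[x]) ! (\<theta> i) \<in> {(w@[x]) ! j, \<sigma> ((w@[x]) ! j)}"
  proof (intro allI impI)
    fix j assume j: "j < length (w@[x])"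
    show "\<exists>i<length v. \<theta> i \<le> j \<and> (w@[x]) ! (\<theta> i) \<in> {(w@[x]) ! j, \<sigma> ((w@[x]) ! j)}"
    proof (cases "j < length w")
      case True
      then obtain i where "i<length v" "\<theta> i \<le> j" "w ! (\<theta> i) \<in> {w ! j, \<sigma> (w ! j)}" using c3 by blast
      thus ?thesis using True c2
        by (intro exI[of _ i]) (auto simp: nth_append)
    next
      case False
      hence jw: "j = length w" using j by simp
      from assms(2) obtain p where p: "p < length w" "w ! p = u" by (auto simp: in_set_conv_nth)
      then obtain i where i: "i<length v" "\<theta> i \<le> p" "w ! (\<theta> i) \<in> {u, \<sigma> u}" using c3 by blast
      have "w ! (\<theta> i) \<in> {x, \<sigma> x}" using i(3) assms(3,4) by auto
      thus ?thesis using i c2 jw p by (intro exI[of _ i]) (auto simp: nth_append)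
    qed
  qed
  ultimately show ?thesis using m unfolding word_le_def by blast
qed

lemma emb_word_le:
  assumes "emb \<sigma> v w" "set w \<subseteq> E" "\<forall>e\<in>E. \<sigma> (\<sigma> e) = e"
  shows "word_le \<sigma> (rev v) (rev w)"
  using assms
proof (induction rule: emb.induct)
  case Nil thus ?case by (simp add: word_le_Nil)
next
  case (Same v w x) thus ?case by (simp add: word_le_snoc_same)
next
  case (Skip v w x)
  then obtain u where "u \<in> set (rev w)" "u = x \<or> u = \<sigma> x" by auto
  moreover have "\<sigma> (\<sigma> x) = x" using Skip.prems by auto
  ultimately show ?case using Skip word_le_snoc_skip by fastforce
qed

lemma word_le_emb:
  assumes "word_le \<sigma> v w" shows "emb \<sigma> (rev v) (rev w)"
  using assms
proof (induction w arbitrary: v rule: rev_induct)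
  case Nil
  then obtain \<theta> where "\<forall>i<length v. \<theta> i < length ([]::'a list)"
    unfolding word_le_def by blast
  hence "v = []" by auto
  thus ?case by (simp add: emb.Nil)
next
  case (snoc x w)
  from snoc.prems obtain \<theta> where m: "strict_mono_on {..<length v} \<theta>"
    and c2: "\<forall>i<length v. \<theta> i < length (w@[x]) \<and> v ! i = (w@[x]) ! (\<theta> i)"
    and c3: "\<forall>j<length (w@[x]). \<exists>i<length v. \<theta> i \<le> j \<and> (w@[x]) ! (\<theta> i) \<in> {(w@[x]) ! j, \<sigma> ((w@[x]) ! j)}"
    unfolding word_le_def by blast
  have "v \<noteq> []" using c3[rule_format, of 0] by auto
  then obtain v0 y where v: "v = v0 @ [y]" by (metis rev_exhaust)
  let ?m = "length v0"
  have mlt: "\<And>i. i < ?m \<Longrightarrow> \<theta> i < \<theta> ?m" using m v by (auto simp: strict_mono_on_def)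
  have ltm: "\<theta> ?m < length w + 1" using c2 v by auto
  show ?case
  proof (cases "\<theta> ?m = length w")
    case True
    have yx: "y = x" using c2[rule_format, of ?m] v True by (auto simp: nth_append)
    have "word_le \<sigma> v0 w"
      unfolding word_le_def
    proof (intro exI conjI)
      show "strict_mono_on {..<length v0} \<theta>" using m v by (auto simp: strict_mono_on_def)
      show "\<forall>i<length v0. \<theta> i < length w \<and> v0 ! i = w ! (\<theta> i)"
      proof (intro allI impI)
        fix i assume i: "i < length v0"
        have "\<theta> i < length w" using mlt[OF i] True by simp
        moreover have "v ! i = (w@[x]) ! (\<theta> i)" using c2 i v by auto
        ultimately show "\<theta> i < length w \<and> v0 ! i = w ! (\<theta> i)" using i v by (auto simp: nth_append)
      qed
      show "\<forall>j<length w. \<exists>i<length v0. \<theta> i \<le> j \<and> w ! (\<theta> i) \<in> {w ! j, \<sigma> (w ! j)}"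
      proof (intro allI impI)
        fix j assume j: "j < length w"
        then obtain i where i: "i < length v" "\<theta> i \<le> j" "(w@[x]) ! (\<theta> i) \<in> {(w@[x]) ! j, \<sigma> ((w@[x]) ! j)}"
          using c3[rule_format, of j] j by auto
        have "i \<noteq> ?m" using i(2) j True by auto
        hence "i < ?m" using i(1) v by auto
        thus "\<exists>i<length v0. \<theta> i \<le> j \<and> w ! (\<theta> i) \<in> {w ! j, \<sigma> (w ! j)}"
          using i j by (intro exI[of _ i]) (auto simp: nth_append)
      qed
    qed
    hence "emb \<sigma> (rev v0) (rev w)" using snoc.IH by blast
    thus ?thesis using v yx by (simp add: emb.Same)
  next
    case False
    hence tm: "\<theta> ?m < length w" using ltm by simp
    have tl: "\<And>i. i < length v \<Longrightarrow> \<theta> i < length w"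
    proof -
      fix i assume "i < length v"
      hence "i < ?m \<or> i = ?m" using v by auto
      thus "\<theta> i < length w" using mlt tm by fastforce
    qed
    have "word_le \<sigma> v w"
      unfolding word_le_def
    proof (intro exI conjI)
      show "strict_mono_on {..<length v} \<theta>" using m .
      show "\<forall>i<length v. \<theta> i < length w \<and> v ! i = w ! (\<theta> i)"
        using c2 tl by (auto simp: nth_append)
      show "\<forall>j<length w. \<exists>i<length v. \<theta> i \<le> j \<and> w ! (\<theta> i) \<in> {w ! j, \<sigma> (w ! j)}"
      proof (intro allI impI)
        fix j assume j: "j < length w"
        then obtain i where i: "i < length v" "\<theta> i \<le> j" "(w@[x]) ! (\<theta> i) \<in> {(w@[x]) ! j, \<sigma> ((w@[x]) ! j)}"
          using c3[rule_format, of j] j by auto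
        thus "\<exists>i<length v. \<theta> i \<le> j \<and> w ! (\<theta> i) \<in> {w ! j, \<sigma> (w ! j)}"
          using i j tl by (intro exI[of _ i]) (auto simp: nth_append)
      qed
    qed
    hence e: "emb \<sigma> (rev v) (rev w)" using snoc.IH by blast
    obtain i where i: "i < length v" "(w@[x]) ! (\<theta> i) \<in> {x, \<sigma> x}"
      using c3[rule_format, of "length w"] by (auto simp: nth_append)
    have "w ! (\<theta> i) \<in> set (rev w)" using tl[OF i(1)] by simp
    moreover have "w ! (\<theta> i) \<in> {x, \<sigma> x}" using i tl[OF i(1)] by (simp add: nth_append)
    ultimately have "\<exists>u\<in>set (rev w). u = x \<or> u = \<sigma> x" by blast
    thus ?thesis using e by (simp add: emb.Skip)
  qed
qed

lemma emb_cons_iff: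
  assumes "set w \<subseteq> E" "\<forall>e\<in>E. \<sigma> (\<sigma> e) = e"
  shows "emb \<sigma> (y#v) w \<longleftrightarrow> (\<exists>zs w'. w = zs @ y # w' \<and> emb \<sigma> v w' \<and>
            set zs \<subseteq> {z\<in>E. \<exists>u\<in>set (y#v). u = z \<or> u = \<sigma> z})"
proof
  assume "emb \<sigma> (y#v) w"
  then show "\<exists>zs w'. w = zs @ y # w' \<and> emb \<sigma> v w' \<and>
            set zs \<subseteq> {z\<in>E. \<exists>u\<in>set (y#v). u = z \<or> u = \<sigma> z}"
    using assms(1)
  proof (induction "y#v" w rule: emb.induct)
    case (Same w)
    show ?case by (rule exI[of _ "[]"]) (use Same in auto)
  next
    case (Skip w x)
    then obtain zs w' where zw: "w = zs @ y # w'" "emb \<sigma> v w'"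
      "set zs \<subseteq> {z\<in>E. \<exists>u\<in>set (y#v). u = z \<or> u = \<sigma> z}" by auto
    obtain u where u: "u\<in>set w" "u = x \<or> u = \<sigma> x" using Skip by auto
    have xE: "x \<in> E" using Skip.prems by auto
    have "\<forall>x\<in>set w. \<exists>u\<in>set (y#v). u = x \<or> u = \<sigma> x"
      using emb_cls[OF Skip.hyps(1) _ assms(2)] Skip.prems by auto
    then obtain u' where u': "u' \<in> set (y#v)" "u' = u \<or> u' = \<sigma> u" using u by blast
    have "\<exists>u\<in>set (y#v). u = x \<or> u = \<sigma> x" using u u' xE assms(2) by metis
    thus ?case using zw xE by (intro exI[of _ "x#zs"] exI[of _ w']) auto
  qed
next
  assume "\<exists>zs w'. w = zs @ y # w' \<and> emb \<sigma> v w' \<and>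
            set zs \<subseteq> {z\<in>E. \<exists>u\<in>set (y#v). u = z \<or> u = \<sigma> z}"
  then obtain zs w' where zw: "w = zs @ y # w'" "emb \<sigma> v w'"
      "set zs \<subseteq> {z\<in>E. \<exists>u\<in>set (y#v). u = z \<or> u = \<sigma> z}" by blast
  have sv: "set (y#v) \<subseteq> set (y#w')" using emb_set[OF zw(2)] by auto
  have "emb \<sigma> (y#v) (zs @ y # w')" using zw(3)
  proof (induction zs)
    case Nil thus ?case using zw(2) by (simp add: emb.Same)
  next
    case (Cons z zs)
    then obtain u where "u \<in> set (y#v)" "u = z \<or> u = \<sigma> z" by auto
    hence ex: "\<exists>u\<in>set (zs @ y # w'). u = z \<or> u = \<sigma> z" using sv by auto
    have IH: "emb \<sigma> (y#v) (zs @ y # w')" using Cons by auto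
    show ?case using emb.Skip[OF IH ex] by simp
  qed
  thus "emb \<sigma> (y#v) w" using zw by simp
qed

definition UpR :: "'a set \<Rightarrow> ('a \<Rightarrow> 'a) \<Rightarrow> 'a list \<Rightarrow> 'a list set" where
  "UpR E \<sigma> v = {w \<in> lists E. emb \<sigma> (rev v) (rev w)}"

lemma UpR_ordered:
  assumes "v \<in> lists E" "\<forall>e\<in>E. \<sigma> (\<sigma> e) = e"
  shows "ordered_language E (UpR E \<sigma> v)"
  using assms(1)
proof (induction v rule: rev_induct)
  case Nil
  have "UpR E \<sigma> [] = {[]}" unfolding UpR_def using emb_Nil[of \<sigma> "[]"] by (auto intro: emb.Nil)
  thus ?case by (simp add: ordered_language.singleton)
next
  case (snoc y v0)
  define C where "C = {z\<in>E. \<exists>u\<in>set (y#rev v0). u = z \<or> u = \<sigma> z}"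
  have yE: "y \<in> E" using snoc.prems by auto
  have eq: "UpR E \<sigma> (v0 @ [y]) = conc (conc (UpR E \<sigma> v0) {[y]}) (lists C)"
  proof (intro set_eqI iffI)
    fix w assume "w \<in> UpR E \<sigma> (v0 @ [y])"
    hence wE: "w \<in> lists E" and e: "emb \<sigma> (y # rev v0) (rev w)" unfolding UpR_def by auto
    from e emb_cons_iff[of "rev w" E \<sigma> y "rev v0"] wE assms(2) obtain zs w' where
      zw: "rev w = zs @ y # w'" "emb \<sigma> (rev v0) w'" "set zs \<subseteq> C" unfolding C_def by auto
    have w: "w = (rev w' @ [y]) @ rev zs" using zw(1) by (metis append.assoc append_Cons append_Nil rev.simps(2) rev_append rev_rev_ident)
    have "rev w' \<in> lists E" using wE w by auto
    hence "rev w' \<in> UpR E \<sigma> v0" using zw(2) unfolding UpR_def by simp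
    thus "w \<in> conc (conc (UpR E \<sigma> v0) {[y]}) (lists C)" using w zw(3) unfolding conc_def
      by (intro CollectI exI[of _ "rev w' @ [y]"] exI[of _ "rev zs"]) auto
  next
    fix w assume "w \<in> conc (conc (UpR E \<sigma> v0) {[y]}) (lists C)"
    then obtain a b where w: "w = a @ y # b" and a: "a \<in> UpR E \<sigma> v0" and b: "b \<in> lists C"
      unfolding conc_def by force
    have CE: "C \<subseteq> E" unfolding C_def by auto
    have wE: "w \<in> lists E" using w a b CE yE unfolding UpR_def by auto
    have "rev w = rev b @ y # rev a" using w by simp
    moreover have "emb \<sigma> (rev v0) (rev a)" using a unfolding UpR_def by auto
    moreover have "set (rev b) \<subseteq> C" using b by auto
    moreover have "set (rev w) \<subseteq> E" using wE by auto
    ultimately have "emb \<sigma> (y # rev v0) (rev w)"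
      using emb_cons_iff[of "rev w" E \<sigma> y "rev v0"] assms(2) unfolding C_def by blast
    thus "w \<in> UpR E \<sigma> (v0 @ [y])" using wE unfolding UpR_def by simp
  qed
  have "ordered_language E (UpR E \<sigma> v0)" using snoc by auto
  moreover have "ordered_language E {[y]}" using yE by (simp add: ordered_language.singleton)
  moreover have "ordered_language E (lists C)" unfolding C_def by (rule ordered_language.star) auto
  ultimately show ?case unfolding eq by (intro ordered_language.concat)
qed

definition goodseq :: "('a \<Rightarrow> 'a) \<Rightarrow> (nat \<Rightarrow> 'a list) \<Rightarrow> bool" where
  "goodseq \<sigma> g \<longleftrightarrow> (\<exists>i j. i < j \<and> emb \<sigma> (g i) (g j))"

definition badseqs :: "('a \<Rightarrow> 'a) \<Rightarrow> 'a set \<Rightarrow> (nat \<Rightarrow> 'a list) set" where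
  "badseqs \<sigma> A = {g. (\<forall>i. g i \<in> lists A) \<and> \<not> goodseq \<sigma> g}"

definition extends :: "'a list list \<Rightarrow> (nat \<Rightarrow> 'a list) \<Rightarrow> bool" where
  "extends p g \<longleftrightarrow> (\<forall>k<length p. g k = p ! k)"

definition choosew :: "('a \<Rightarrow> 'a) \<Rightarrow> 'a set \<Rightarrow> 'a list list \<Rightarrow> 'a list" where
  "choosew \<sigma> A p = (SOME x. \<exists>g\<in>badseqs \<sigma> A. extends p g \<and> g (length p) = x \<and>
      (\<forall>g'\<in>badseqs \<sigma> A. extends p g' \<longrightarrow> length x \<le> length (g' (length p))))"

primrec pre :: "('a \<Rightarrow> 'a) \<Rightarrow> 'a set \<Rightarrow> nat \<Rightarrow> 'a list list" where
  "pre \<sigma> A 0 = []"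
| "pre \<sigma> A (Suc n) = pre \<sigma> A n @ [choosew \<sigma> A (pre \<sigma> A n)]"

lemma pre_length: "length (pre \<sigma> A n) = n" by (induction n) auto

lemma choosew_spec:
  assumes "\<exists>g\<in>badseqs \<sigma> A. extends p g"
  shows "\<exists>g\<in>badseqs \<sigma> A. extends p g \<and> g (length p) = choosew \<sigma> A p \<and>
      (\<forall>g'\<in>badseqs \<sigma> A. extends p g' \<longrightarrow> length (choosew \<sigma> A p) \<le> length (g' (length p)))"
proof -
  from assms obtain g where "g \<in> badseqs \<sigma> A \<and> extends p g" by blast
  from ex_has_least_nat[of "\<lambda>g. g \<in> badseqs \<sigma> A \<and> extends p g", OF this, of "\<lambda>g. length (g (length p))"]
  obtain g0 where g0: "g0 \<in> badseqs \<sigma> A" "extends p g0"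
    "\<forall>g'. g' \<in> badseqs \<sigma> A \<and> extends p g' \<longrightarrow> length (g0 (length p)) \<le> length (g' (length p))"
    by blast
  have "\<exists>x. \<exists>g\<in>badseqs \<sigma> A. extends p g \<and> g (length p) = x \<and>
      (\<forall>g'\<in>badseqs \<sigma> A. extends p g' \<longrightarrow> length x \<le> length (g' (length p)))"
    using g0 by blast
  thus ?thesis unfolding choosew_def by (rule someI_ex)
qed

lemma pre_ext:
  assumes "badseqs \<sigma> A \<noteq> {}"
  shows "\<exists>g\<in>badseqs \<sigma> A. extends (pre \<sigma> A n) g"
proof (induction n)
  case 0 thus ?case using assms unfolding extends_def by auto
next
  case (Suc n)
  from choosew_spec[OF Suc] obtain g where g: "g\<in>badseqs \<sigma> A" "extends (pre \<sigma> A n) g"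
    "g (length (pre \<sigma> A n)) = choosew \<sigma> A (pre \<sigma> A n)" by blast
  have "extends (pre \<sigma> A (Suc n)) g"
    using g unfolding extends_def by (auto simp: nth_append less_Suc_eq pre_length)
  thus ?case using g by blast
qed

definition mbs :: "('a \<Rightarrow> 'a) \<Rightarrow> 'a set \<Rightarrow> nat \<Rightarrow> 'a list" where
  "mbs \<sigma> A n = choosew \<sigma> A (pre \<sigma> A n)"

lemma pre_eq: "pre \<sigma> A n = map (mbs \<sigma> A) [0..<n]"
  by (induction n) (auto simp: mbs_def)

lemma extends_pre: "extends (pre \<sigma> A n) g \<longleftrightarrow> (\<forall>k<n. g k = mbs \<sigma> A k)"
  unfolding extends_def pre_eq by auto

lemma mbs_bad:
  assumes "badseqs \<sigma> A \<noteq> {}"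
  shows "mbs \<sigma> A \<in> badseqs \<sigma> A"
proof -
  have inA: "mbs \<sigma> A i \<in> lists A" for i
  proof -
    obtain g where g: "g \<in> badseqs \<sigma> A" "extends (pre \<sigma> A (Suc i)) g" using pre_ext[OF assms] by blast
    have "g i = mbs \<sigma> A i" using g(2) unfolding extends_pre by simp
    moreover have "g i \<in> lists A" using g(1) unfolding badseqs_def by blast
    ultimately show ?thesis by simp
  qed
  have "\<not> goodseq \<sigma> (mbs \<sigma> A)"
  proof
    assume "goodseq \<sigma> (mbs \<sigma> A)"
    then obtain i j where ij: "i < j" "emb \<sigma> (mbs \<sigma> A i) (mbs \<sigma> A j)" unfolding goodseq_def by blast
    obtain g where g: "g \<in> badseqs \<sigma> A" "extends (pre \<sigma> A (Suc j)) g" using pre_ext[OF assms] by blast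
    hence "g i = mbs \<sigma> A i" "g j = mbs \<sigma> A j" using ij unfolding extends_pre by auto
    hence "goodseq \<sigma> g" using ij unfolding goodseq_def by metis
    thus False using g unfolding badseqs_def by auto
  qed
  thus ?thesis using inA unfolding badseqs_def by auto
qed

lemma mbs_min:
  assumes "badseqs \<sigma> A \<noteq> {}" "g \<in> badseqs \<sigma> A" "\<forall>k<n. g k = mbs \<sigma> A k"
  shows "length (mbs \<sigma> A n) \<le> length (g n)"
proof -
  have "\<exists>g\<in>badseqs \<sigma> A. extends (pre \<sigma> A n) g" using pre_ext[OF assms(1)] .
  from choosew_spec[OF this] assms(2,3) show ?thesis
    unfolding mbs_def extends_pre pre_length by blast
qed

lemma emb_wqo: "finite A \<Longrightarrow> (\<forall>i. f i \<in> lists A) \<Longrightarrow> goodseq \<sigma> f"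
proof (induction "card A" arbitrary: A f rule: less_induct)
  case less
  show ?case
  proof (rule ccontr)
    assume nb: "\<not> goodseq \<sigma> f"
    let ?m = "mbs \<sigma> A"
    have ne: "badseqs \<sigma> A \<noteq> {}" using nb less.prems unfolding badseqs_def by auto
    have mb: "?m \<in> badseqs \<sigma> A" by (rule mbs_bad[OF ne])
    hence mA: "\<And>i. ?m i \<in> lists A" and mng: "\<not> goodseq \<sigma> ?m" unfolding badseqs_def by auto
    have notgood: "\<And>i j. i < j \<Longrightarrow> \<not> emb \<sigma> (?m i) (?m j)" using mng unfolding goodseq_def by blast
    define N where "N = {n. ?m n \<noteq> []}"
    have fin: "finite {n. ?m n = []}"
    proof -
      have "{n. ?m n = []} \<subseteq> {LEAST n. ?m n = []}"
      proof
        fix n assume n: "n \<in> {n. ?m n = []}"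
        hence l: "?m (LEAST n. ?m n = []) = []" "(LEAST n. ?m n = []) \<le> n"
          by (auto intro: LeastI Least_le)
        show "n \<in> {LEAST n. ?m n = []}"
        proof (rule ccontr)
          assume "n \<notin> {LEAST n. ?m n = []}"
          hence "(LEAST n. ?m n = []) < n" using l by auto
          from notgood[OF this] show False using l n by (auto intro: emb.Nil)
        qed
      qed
      thus ?thesis using finite_subset by blast
    qed
    have infN: "infinite N"
    proof
      assume "finite N"
      hence "finite (N \<union> {n. ?m n = []})" using fin by auto
      moreover have "N \<union> {n. ?m n = []} = UNIV" unfolding N_def by auto
      ultimately show False by simp
    qed
    define F where "F n = (hd (?m n), \<exists>u\<in>set (tl (?m n)). u = hd (?m n) \<or> u = \<sigma> (hd (?m n)))" for n
    have "F ` N \<subseteq> A \<times> UNIV"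
    proof
      fix z assume "z \<in> F ` N"
      then obtain n where "n \<in> N" "z = F n" by blast
      moreover have "?m n \<in> lists A" by (rule mA)
      ultimately show "z \<in> A \<times> UNIV" unfolding N_def F_def by (cases "?m n") auto
    qed
    hence "finite (F ` N)" using less.prems(1) finite_subset by (metis finite_SigmaI finite_UNIV)
    then obtain y where "infinite (F -` {y} \<inter> N)" using inf_img_fin_domE'[OF _ infN] by metis
    moreover obtain x b where y: "y = (x, b)" by fastforce
    define N2 where "N2 = F -` {y} \<inter> N"
    have inf2: "infinite N2" using calculation unfolding N2_def by simp
    define \<phi> where "\<phi> = enumerate N2"
    have \<phi>N2: "\<phi> k \<in> N2" for k unfolding \<phi>_def by (rule enumerate_in_set[OF inf2])
    have mono: "\<And>i j. i < j \<Longrightarrow> \<phi> i < \<phi> j" unfolding \<phi>_def using enumerate_mono inf2 by blast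
    define t where "t k = tl (?m (\<phi> k))" for k
    have mt: "?m (\<phi> k) = x # t k" for k
    proof -
      have "?m (\<phi> k) \<noteq> []" "F (\<phi> k) = (x, b)" using \<phi>N2[of k] y unfolding N2_def N_def by auto
      thus ?thesis unfolding t_def F_def by (cases "?m (\<phi> k)") auto
    qed
    have bt: "b \<longleftrightarrow> (\<exists>u\<in>set (t k). u = x \<or> u = \<sigma> x)" for k
    proof -
      have "F (\<phi> k) = (x, b)" using \<phi>N2[of k] y unfolding N2_def by auto
      thus ?thesis using mt[of k] unfolding F_def t_def by auto
    qed
    have xA: "x \<in> A" using mA[of "\<phi> 0"] mt[of 0] by auto
    have tA: "t k \<in> lists A" for k using mA[of "\<phi> k"] mt[of k] by auto
    show False
    proof (cases b)
      case False
      have "\<forall>k. t k \<in> lists (A - {x})"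
      proof
        fix k show "t k \<in> lists (A - {x})" using tA[of k] bt[of k] False by auto
      qed
      moreover have "card (A - {x}) < card A" using less.prems(1) xA by (rule card_Diff1_less)
      ultimately have "goodseq \<sigma> t" using less.hyps[of "A - {x}" t] less.prems by auto
      then obtain i j where ij: "i<j" "emb \<sigma> (t i) (t j)" unfolding goodseq_def by blast
      hence "emb \<sigma> (?m (\<phi> i)) (?m (\<phi> j))" using mt by (simp add: emb.Same)
      thus False using notgood mono[OF ij(1)] by blast
    next
      case True
      define h where "h k = (if k < \<phi> 0 then ?m k else t (k - \<phi> 0))" for k
      have hA: "\<forall>k. h k \<in> lists A" unfolding h_def using mA tA by auto
      have "goodseq \<sigma> h"
      proof (rule ccontr)
        assume "\<not> goodseq \<sigma> h"
        hence "h \<in> badseqs \<sigma> A" using hA unfolding badseqs_def by auto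
        moreover have "\<forall>k<\<phi> 0. h k = ?m k" unfolding h_def by auto
        ultimately have "length (?m (\<phi> 0)) \<le> length (h (\<phi> 0))" by (rule mbs_min[OF ne])
        thus False unfolding h_def using mt[of 0] by simp
      qed
      then obtain i j where ij: "i < j" "emb \<sigma> (h i) (h j)" unfolding goodseq_def by blast
      show False
      proof (cases "j < \<phi> 0")
        case True
        thus False using ij notgood unfolding h_def by auto
      next
        case jF: False
        have le0: "\<phi> 0 \<le> \<phi> (j - \<phi> 0)" using mono[of 0 "j - \<phi> 0"] by (cases "j - \<phi> 0") auto
        show False
        proof (cases "i < \<phi> 0")
          case True
          have e: "emb \<sigma> (?m i) (t (j - \<phi> 0))" using ij True jF unfolding h_def by auto
          have "\<exists>u\<in>set (t (j - \<phi> 0)). u = x \<or> u = \<sigma> x" using bt \<open>b\<close> by blast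
          from emb.Skip[OF e this] have "emb \<sigma> (?m i) (?m (\<phi> (j - \<phi> 0)))" using mt by simp
          moreover have "i < \<phi> (j - \<phi> 0)" using True le0 by simp
          ultimately show False using notgood by blast
        next
          case False
          have e: "emb \<sigma> (t (i - \<phi> 0)) (t (j - \<phi> 0))" using ij False jF unfolding h_def by auto
          hence "emb \<sigma> (?m (\<phi> (i - \<phi> 0))) (?m (\<phi> (j - \<phi> 0)))" using mt by (simp add: emb.Same)
          moreover have "\<phi> (i - \<phi> 0) < \<phi> (j - \<phi> 0)" using mono ij(1) False by simp
          ultimately show False using notgood by blast
        qed
      qed
    qed
  qed
qed

lemma union_ordered:
  assumes "finite M" "M \<subseteq> lists E" "\<forall>e\<in>E. \<sigma> (\<sigma> e) = e"
  shows "ordered_language E (\<Union> (UpR E \<sigma> ` M))"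
  using assms(1,2)
proof (induction M rule: finite_induct)
  case empty thus ?case by (simp add: ordered_language.empty)
next
  case (insert v M)
  thus ?case using UpR_ordered[OF _ assms(3), of v] by (simp add: ordered_language.union)
qed

theorem mainTheorem8:
  fixes E :: "'a::linorder set" and \<sigma> :: "'a \<Rightarrow> 'a" and I :: "'a list set"
  assumes "OS_B_obj E \<sigma>"
    and "upward_closed E \<sigma> I"
  shows "ordered_language E I"
proof -
  have finE: "finite E" and inv: "\<forall>e\<in>E. \<sigma> (\<sigma> e) = e" using assms(1) unfolding OS_B_obj_def by auto
  have IE: "I \<subseteq> lists E" and up: "\<And>v w. v \<in> I \<Longrightarrow> w \<in> lists E \<Longrightarrow> word_le \<sigma> v w \<Longrightarrow> w \<in> I"
    using assms(2) unfolding upward_closed_def by auto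
  define M where "M = {v \<in> I. \<forall>u\<in>I. emb \<sigma> (rev u) (rev v) \<longrightarrow> u = v}"
  have finM: "finite M"
  proof (rule ccontr)
    assume "infinite M"
    then obtain f :: "nat \<Rightarrow> 'a list" where f: "inj f" "range f \<subseteq> M"
      using infinite_countable_subset by blast
    have "\<forall>i. rev (f i) \<in> lists E"
    proof
      fix i have "f i \<in> I" using f(2) unfolding M_def by auto
      hence "f i \<in> lists E" using IE by blast
      thus "rev (f i) \<in> lists E" by (metis in_lists_conv_set set_rev)
    qed
    from emb_wqo[OF finE this] obtain i j where ij: "i < j" "emb \<sigma> (rev (f i)) (rev (f j))"
      unfolding goodseq_def by blast
    have "f j \<in> M" "f i \<in> I" using f(2) unfolding M_def by auto
    hence "f i = f j" using ij(2) unfolding M_def by blast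
    thus False using f(1) ij(1) by (auto dest: injD)
  qed
  have below: "w \<in> I \<Longrightarrow> \<exists>m\<in>M. emb \<sigma> (rev m) (rev w)" for w
  proof (induction "length w" arbitrary: w rule: less_induct)
    case less
    show ?case
    proof (cases "w \<in> M")
      case True thus ?thesis using emb_refl by blast
    next
      case False
      then obtain u where u: "u \<in> I" "emb \<sigma> (rev u) (rev w)" "u \<noteq> w"
        using less.prems unfolding M_def by blast
      have "length u \<le> length w" using emb_length[OF u(2)] by simp
      moreover have "length u \<noteq> length w"
        using emb_length_eq[OF u(2)] u(3) by auto
      ultimately have "length u < length w" by simp
      from less.hyps[OF this u(1)] obtain m where "m \<in> M" "emb \<sigma> (rev m) (rev u)" by blast
      thus ?thesis using emb_trans[OF u(2)] by blast
    qed
  qed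
  have eq: "I = \<Union> (UpR E \<sigma> ` M)"
  proof (intro set_eqI iffI)
    fix w assume w: "w \<in> I"
    from below[OF w] obtain m where "m \<in> M" "emb \<sigma> (rev m) (rev w)" by blast
    thus "w \<in> \<Union> (UpR E \<sigma> ` M)" using w IE unfolding UpR_def by auto
  next
    fix w assume "w \<in> \<Union> (UpR E \<sigma> ` M)"
    then obtain m where m: "m \<in> M" "w \<in> lists E" "emb \<sigma> (rev m) (rev w)" unfolding UpR_def by auto
    have "set (rev w) \<subseteq> E" using m(2) by auto
    from emb_word_le[OF m(3) this inv] have "word_le \<sigma> m w" by simp
    moreover have "m \<in> I" using m(1) unfolding M_def by auto
    ultimately show "w \<in> I" using up m(2) by blast
  qed
  have "M \<subseteq> lists E" using IE unfolding M_def by auto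
  thus ?thesis unfolding eq using union_ordered[OF finM _ inv] by blast
qed

end
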